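(* Let $X$ be a topological space in which every open set is a union of countably many clopen sets. Assume that $C_p(X,\{0,1\})$ is an $\alpha_1$ space, and let $\mathcal{U}=\{U_n:n\in\mathbb{N}\}$ be a bijectively enumerated family of open subsets of $X$. Then the Marczewski map $\mathcal{U}:X\to P(\mathbb{N})$ is a discrete limit of a sequence of continuous functions $\Psi_m:X\to P(\mathbb{N})$.
   Context: $C_p(X,\{0,1\})$ is the set of continuous functions $X\to\{0,1\}$ with the topology of pointwise convergence. In a space $Y$, a countable set $A$ of distinct points converges to $y$ if some (equivalently every) bijective enumeration of $A$ converges to $y$; $Y$ is an $\alpha_1$ space if for each $y\in Y$ and each sequence $A_1,A_2,\dots$ of countably infinite sets each converging to $y$, there are cofinite $B_n\subseteq A_n$ such that $\bigcup_nB_n$ converges to $y$. $P(\mathbb{N})$ carries the Cantor space topology (identified with $\{0,1\}^{\mathbb{N}}$ via characteristic functions). The Marczewski map of a bijectively enumerated family $\mathcal{U}=\{U_n\}$ of subsets of $X$ is $\mathcal{U}(x)=\{n\in\mathbb{N}:x\in U_n\}$. A function $f$ on $X$ is a discrete limit of functions $f_m$ if for each $x\in X$, $f_m(x)=f(x)$ for all but finitely many $m$. *)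

theory Defs
  imports "HOL-Analysis.Analysis"
begin

text \<open>The two-point space \<open>{0,1}\<close> is rendered as \<open>bool\<close> with the discrete topology.\<close>

definition Cp01 :: "'a topology \<Rightarrow> ('a \<Rightarrow> bool) topology" where
  "Cp01 X = subtopology (product_topology (\<lambda>_. discrete_topology (UNIV::bool set)) (topspace X))
                        {f. continuous_map X (discrete_topology UNIV) f}"

definition cantor :: "(nat \<Rightarrow> bool) topology" where
  "cantor = product_topology (\<lambda>_. discrete_topology (UNIV::bool set)) UNIV"

definition powerset_nat_top :: "nat set topology" where
  "powerset_nat_top = topology (\<lambda>S. openin cantor ((\<lambda>A n. n \<in> A) ` S))"

definition set_converges :: "'a topology \<Rightarrow> 'a set \<Rightarrow> 'a \<Rightarrow> bool" where
  "set_converges T A y \<longleftrightarrow>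
     (\<exists>e. bij_betw e (UNIV::nat set) A \<and> limitin T e y sequentially)"

definition alpha1_space :: "'a topology \<Rightarrow> bool" where
  "alpha1_space T \<longleftrightarrow>
     (\<forall>y \<in> topspace T. \<forall>A :: nat \<Rightarrow> 'a set.
        (\<forall>n. A n \<subseteq> topspace T \<and> countable (A n) \<and> infinite (A n) \<and> set_converges T (A n) y) \<longrightarrow>
        (\<exists>B. (\<forall>n. B n \<subseteq> A n \<and> finite (A n - B n)) \<and> set_converges T (\<Union>n. B n) y))"

definition marczewski :: "(nat \<Rightarrow> 'a set) \<Rightarrow> 'a \<Rightarrow> nat set" where
  "marczewski U x = {n. x \<in> U n}"

definition discrete_limit :: "'a set \<Rightarrow> (nat \<Rightarrow> 'a \<Rightarrow> 'b) \<Rightarrow> ('a \<Rightarrow> 'b) \<Rightarrow> bool" where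
  "discrete_limit S fs f \<longleftrightarrow> (\<forall>x \<in> S. \<forall>\<^sub>F m in sequentially. fs m x = f x)"

lemma istopology_powerset_nat_top:
  "istopology (\<lambda>S. openin cantor ((\<lambda>A n. n \<in> A) ` S))"
proof -
  have inj: "inj (\<lambda>(A::nat set) n. n \<in> A)" by (auto simp: inj_def fun_eq_iff)
  show ?thesis unfolding istopology_def
    by (auto simp: image_Int[OF inj] image_Union intro: openin_Int openin_Union)
qed

end

theory Submission
  imports Defs
begin

lemma cont_bool:
  "continuous_map X (discrete_topology UNIV) (f::'a\<Rightarrow>bool) \<longleftrightarrow>
     openin X {x\<in>topspace X. f x} \<and> closedin X {x\<in>topspace X. f x}"
proof
  assume c: "continuous_map X (discrete_topology UNIV) f"
  have "openin X {x\<in>topspace X. f x \<in> {True}}" using c unfolding continuous_map by (metis openin_discrete_topology subset_UNIV)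
  moreover have "closedin X {x\<in>topspace X. f x \<in> {True}}" using c unfolding continuous_map_closedin by (metis closedin_discrete_topology subset_UNIV)
  ultimately show "openin X {x\<in>topspace X. f x} \<and> closedin X {x\<in>topspace X. f x}" by simp
next
  assume a: "openin X {x\<in>topspace X. f x} \<and> closedin X {x\<in>topspace X. f x}"
  show "continuous_map X (discrete_topology UNIV) f"
    unfolding continuous_map
  proof (intro conjI allI impI)
    fix U :: "bool set"
    have e: "{x\<in>topspace X. f x \<in> U} = (if True\<in>U then {x\<in>topspace X. f x} else {}) \<union>
          (if False\<in>U then topspace X - {x\<in>topspace X. f x} else {})"
      by (cases "True \<in> U"; cases "False \<in> U"; auto) (metis (full_types))+
    show "openin X {x\<in>topspace X. f x \<in> U}" unfolding e using a
      by (intro openin_Un) (auto simp: closedin_def)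
  qed auto
qed

lemma openin_pnt: "openin powerset_nat_top S \<longleftrightarrow> openin cantor ((\<lambda>A n. n \<in> A) ` S)"
  unfolding powerset_nat_top_def using istopology_powerset_nat_top by simp

lemma topspace_pnt: "topspace powerset_nat_top = UNIV"
proof -
  have "(\<lambda>A n. n \<in> A) ` (UNIV :: nat set set) = UNIV"
    by (auto simp: image_iff) (metis mem_Collect_eq)
  moreover have "topspace cantor = UNIV" by (simp add: cantor_def)
  ultimately have "openin powerset_nat_top UNIV" by (simp add: openin_pnt) (metis openin_topspace)
  thus ?thesis by (meson openin_subset subset_UNIV subset_antisym)
qed

lemma cont_pnt:
  assumes "\<And>n. openin X {x\<in>topspace X. n \<in> \<psi> x} \<and> closedin X {x\<in>topspace X. n \<in> \<psi> x}"
  shows "continuous_map X powerset_nat_top \<psi>"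
proof -
  have c: "continuous_map X cantor (\<lambda>x. (\<lambda>n. n \<in> \<psi> x))"
    unfolding cantor_def continuous_map_componentwise_UNIV cont_bool using assms by simp
  have inj: "inj (\<lambda>(A::nat set) n. n \<in> A)" by (auto simp: inj_def fun_eq_iff)
  show ?thesis unfolding continuous_map
  proof (intro conjI allI impI)
    fix S assume "openin powerset_nat_top S"
    hence o: "openin cantor ((\<lambda>A n. n \<in> A) ` S)" by (simp add: openin_pnt)
    have "{x\<in>topspace X. \<psi> x \<in> S} = {x\<in>topspace X. (\<lambda>n. n \<in> \<psi> x) \<in> (\<lambda>A n. n \<in> A) ` S}"
      using inj_image_mem_iff[OF inj] by blast
    thus "openin X {x\<in>topspace X. \<psi> x \<in> S}" using c o unfolding continuous_map by simp
  qed (simp add: topspace_pnt)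
qed

lemma limitin_disc: "limitin (discrete_topology UNIV) f l F \<longleftrightarrow> eventually (\<lambda>j. f j = l) F"
proof
  assume "limitin (discrete_topology UNIV) f l F"
  hence "eventually (\<lambda>j. f j \<in> {l}) F" unfolding limitin_def by (metis insertI1 openin_discrete_topology subset_UNIV)
  thus "eventually (\<lambda>j. f j = l) F" by simp
next
  assume "eventually (\<lambda>j. f j = l) F"
  thus "limitin (discrete_topology UNIV) f l F" unfolding limitin_def
    by (auto elim: eventually_mono)
qed

definition zf :: "'a topology \<Rightarrow> 'a \<Rightarrow> bool" where
  "zf X = (\<lambda>x. if x \<in> topspace X then False else undefined)"

lemma top_Cp: "f \<in> topspace (Cp01 X) \<longleftrightarrow> f \<in> extensional (topspace X) \<and>
   openin X {x\<in>topspace X. f x} \<and> closedin X {x\<in>topspace X. f x}"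
  unfolding Cp01_def by (auto simp: topspace_product_topology PiE_def cont_bool)

lemma zf_top: "zf X \<in> topspace (Cp01 X)"
  unfolding top_Cp zf_def by (auto simp: extensional_def)

lemma top_Cp2: "f \<in> topspace (Cp01 X) \<Longrightarrow>
   f \<in> topspace (product_topology (\<lambda>_. discrete_topology UNIV) (topspace X)) \<and>
   continuous_map X (discrete_topology UNIV) f"
  unfolding Cp01_def topspace_subtopology by blast

lemma L1:
  assumes "A \<subseteq> topspace (Cp01 X)" "countable A" "infinite A"
    and "\<forall>x\<in>topspace X. finite {f\<in>A. f x}"
  shows "set_converges (Cp01 X) A (zf X)"
proof -
  obtain e0 :: "_ \<Rightarrow> nat" where e0: "bij_betw e0 A UNIV" using countableE_infinite assms(2,3) by blast
  define e where "e = inv_into A e0"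
  have be: "bij_betw e UNIV A" unfolding e_def by (rule bij_betw_inv_into[OF e0])
  have eA: "e j \<in> A" for j using be bij_betw_apply by fastforce
  have eT: "e j \<in> topspace (Cp01 X)" for j using eA assms(1) by blast
  have ev: "\<forall>\<^sub>F j in sequentially. e j x = zf X x" if x: "x \<in> topspace X" for x
  proof -
    have "{j. e j x} = e -` {f\<in>A. f x}" using eA by auto
    moreover have "finite (e -` {f\<in>A. f x})"
      by (rule finite_vimageI[OF assms(4)[rule_format, OF x] bij_betw_imp_inj_on[OF be]])
    ultimately have "finite {j. e j x}" by simp
    then obtain N where N: "{j. e j x} \<subseteq> {..<N}" using finite_nat_bounded by blast
    have "\<forall>j\<ge>N. \<not> e j x"
    proof (intro allI impI)
      fix j assume "N \<le> j" thus "\<not> e j x" using N by force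
    qed
    thus ?thesis unfolding eventually_sequentially zf_def using x by auto
  qed
  have "limitin (Cp01 X) e (zf X) sequentially"
    unfolding Cp01_def limitin_subtopology
  proof (intro conjI)
    show "zf X \<in> {f. continuous_map X (discrete_topology UNIV) f}"
      using top_Cp2[OF zf_top[of X]] by simp
    show "\<forall>\<^sub>F a in sequentially. e a \<in> {f. continuous_map X (discrete_topology UNIV) f}"
      using top_Cp2[OF eT] by simp
    show "limitin (product_topology (\<lambda>_. discrete_topology UNIV) (topspace X)) e (zf X) sequentially"
      unfolding limitin_componentwise limitin_disc
    proof (intro conjI ballI)
      show "zf X \<in> extensional (topspace X)" using zf_top top_Cp by blast
      show "\<forall>\<^sub>F a in sequentially. e a \<in> topspace (product_topology (\<lambda>_. discrete_topology UNIV) (topspace X))"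
        using top_Cp2[OF eT] by simp
      fix x assume "x \<in> topspace X" thus "\<forall>\<^sub>F c in sequentially. e c x = zf X x" by (rule ev)
    qed
  qed
  thus ?thesis unfolding set_converges_def using be by blast
qed

lemma L2:
  assumes "set_converges (Cp01 X) S (zf X)"
  shows "\<exists>e. bij_betw e (UNIV::nat set) S \<and> (\<forall>x\<in>topspace X. finite {j. e j x})"
proof -
  obtain e where be: "bij_betw e UNIV S" and l: "limitin (Cp01 X) e (zf X) sequentially"
    using assms unfolding set_converges_def by blast
  have "limitin (product_topology (\<lambda>_. discrete_topology UNIV) (topspace X)) e (zf X) sequentially"
    using l unfolding Cp01_def limitin_subtopology by blast
  hence ev: "\<forall>x\<in>topspace X. \<forall>\<^sub>F j in sequentially. e j x = zf X x"
    unfolding limitin_componentwise limitin_disc by blast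
  have "finite {j. e j x}" if x: "x \<in> topspace X" for x
  proof -
    obtain N where N: "\<forall>j\<ge>N. e j x = zf X x" using ev x unfolding eventually_sequentially by blast
    have "{j. e j x} \<subseteq> {..<N}"
    proof
      fix j assume "j \<in> {j. e j x}"
      hence "e j x" by simp
      thus "j \<in> {..<N}" using N x unfolding zf_def by (metis lessThan_iff not_le)
    qed
    thus ?thesis using finite_subset by blast
  qed
  thus ?thesis using be by (intro exI[of _ e]) auto
qed

definition clop :: "'a topology \<Rightarrow> 'a set \<Rightarrow> bool" where
  "clop X S \<longleftrightarrow> openin X S \<and> closedin X S"

lemma clop_Union: "finite K \<Longrightarrow> (\<And>S. S \<in> K \<Longrightarrow> clop X S) \<Longrightarrow> clop X (\<Union>K)"
  unfolding clop_def by (auto intro: closedin_Union)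

lemma clop_diff: "clop X S \<Longrightarrow> clop X T \<Longrightarrow> clop X (S - T)"
  unfolding clop_def by auto

lemma clop_Un: "clop X S \<Longrightarrow> clop X T \<Longrightarrow> clop X (S \<union> T)"
  unfolding clop_def by auto

lemma clop_empty: "clop X {}" unfolding clop_def by auto

definition chi :: "'a topology \<Rightarrow> 'a set \<Rightarrow> 'a \<Rightarrow> bool" where
  "chi X D = (\<lambda>x. if x \<in> topspace X then x \<in> D else undefined)"

lemma chi_top: "clop X D \<Longrightarrow> chi X D \<in> topspace (Cp01 X)"
proof -
  assume c: "clop X D"
  hence "D \<subseteq> topspace X" unfolding clop_def using openin_subset by blast
  hence "{x\<in>topspace X. chi X D x} = D" unfolding chi_def by auto
  thus ?thesis unfolding top_Cp using c unfolding clop_def by (auto simp: chi_def extensional_def)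
qed

lemma L3:
  assumes "countable \<C>" "\<forall>C\<in>\<C>. clop X C"
  shows "\<exists>A. A \<subseteq> topspace (Cp01 X) \<and> countable A \<and> (\<forall>f\<in>A. {x\<in>topspace X. f x} \<subseteq> \<Union>\<C>)
     \<and> (\<forall>x\<in>\<Union>\<C>. \<exists>f\<in>A. f x) \<and> (\<forall>x\<in>topspace X. finite {f\<in>A. f x})"
proof (cases "\<C> = {}")
  case True
  thus ?thesis by (intro exI[of _ "{}"]) auto
next
  case False
  define c where "c = from_nat_into \<C>"
  have rc: "range c = \<C>" unfolding c_def using range_from_nat_into[OF False assms(1)] .
  have cc: "clop X (c k)" for k using rc assms(2) by auto
  have ct: "c k \<subseteq> topspace X" for k using cc[of k] unfolding clop_def using openin_subset by blast
  define D where "D k = c k - \<Union>(c ` {..<k})" for k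
  have cD: "clop X (D k)" for k unfolding D_def
    by (intro clop_diff cc clop_Union) (auto simp: cc)
  define A where "A = range (\<lambda>k. chi X (D k))"
  show ?thesis
  proof (intro exI[of _ A] conjI ballI)
    show "A \<subseteq> topspace (Cp01 X)" unfolding A_def using chi_top cD by auto
    show "countable A" unfolding A_def by simp
    fix f assume "f \<in> A"
    then obtain k where "f = chi X (D k)" unfolding A_def by auto
    thus "{x\<in>topspace X. f x} \<subseteq> \<Union>\<C>" unfolding chi_def D_def using rc by auto
  next
    fix x assume "x \<in> \<Union>\<C>"
    then obtain k where k: "x \<in> c k" using rc by auto
    define l where "l = (LEAST i. x \<in> c i)"
    have "x \<in> c l" unfolding l_def using k by (rule LeastI)
    moreover have "\<forall>i<l. x \<notin> c i" unfolding l_def using not_less_Least by blast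
    ultimately have "x \<in> D l" unfolding D_def by auto
    moreover have "x \<in> topspace X" using ct k by blast
    ultimately show "\<exists>f\<in>A. f x" unfolding A_def chi_def by auto
  next
    fix x assume x: "x \<in> topspace X"
    have "{f\<in>A. f x} \<subseteq> {chi X (D (LEAST i. x \<in> c i))}"
    proof
      fix f assume "f \<in> {f\<in>A. f x}"
      then obtain k where f: "f = chi X (D k)" and "f x" unfolding A_def by auto
      hence xk: "x \<in> D k" using x unfolding chi_def by auto
      have "(LEAST i. x \<in> c i) = k"
      proof (rule Least_equality)
        show "x \<in> c k" using xk unfolding D_def by auto
        fix y assume "x \<in> c y" thus "k \<le> y" using xk unfolding D_def by (auto simp: not_le[symmetric])
      qed
      thus "f \<in> {chi X (D (LEAST i. x \<in> c i))}" using f by simp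
    qed
    thus "finite {f\<in>A. f x}" using finite_subset by blast
  qed
qed

lemma clop_of_top: "f \<in> topspace (Cp01 X) \<Longrightarrow> clop X {x\<in>topspace X. f x}"
  unfolding top_Cp clop_def by blast

lemma clop_fin:
  assumes "finite A" "A \<subseteq> topspace (Cp01 X)" "\<forall>f\<in>A. {x\<in>topspace X. f x} \<subseteq> V"
    "\<forall>x\<in>V. \<exists>f\<in>A. f x" "V \<subseteq> topspace X"
  shows "clop X V"
proof -
  have "V = (\<Union>f\<in>A. {x\<in>topspace X. f x})"
  proof
    show "V \<subseteq> (\<Union>f\<in>A. {x\<in>topspace X. f x})"
    proof
      fix x assume x: "x \<in> V"
      then obtain f where "f \<in> A" "f x" using assms(4) by blast
      thus "x \<in> (\<Union>f\<in>A. {x\<in>topspace X. f x})" using x assms(5) by blast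
    qed
    show "(\<Union>f\<in>A. {x\<in>topspace X. f x}) \<subseteq> V" using assms(3) by blast
  qed
  moreover have "clop X (\<Union>f\<in>A. {x\<in>topspace X. f x})"
    using assms(1,2) clop_of_top by (intro clop_Union) auto
  ultimately show ?thesis by simp
qed

theorem mainTheorem5:
  fixes X :: "'a topology" and U :: "nat \<Rightarrow> 'a set"
  assumes clopen_base: "\<forall>V. openin X V \<longrightarrow>
            (\<exists>\<C>. countable \<C> \<and> (\<forall>C \<in> \<C>. openin X C \<and> closedin X C) \<and> \<Union>\<C> = V)"
    and alpha1: "alpha1_space (Cp01 X)"
    and inj: "inj U"
    and opens: "\<forall>n. openin X (U n)"
  shows "\<exists>\<Psi> :: nat \<Rightarrow> 'a \<Rightarrow> nat set.
           (\<forall>m. continuous_map X powerset_nat_top (\<Psi> m)) \<and>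
           discrete_limit (topspace X) \<Psi> (marczewski U)"
proof -
  have Ut: "U n \<subseteq> topspace X" for n using opens openin_subset by blast
  have "\<forall>n. \<exists>A. A \<subseteq> topspace (Cp01 X) \<and> countable A \<and> (\<forall>f\<in>A. {x\<in>topspace X. f x} \<subseteq> U n)
     \<and> (\<forall>x\<in>U n. \<exists>f\<in>A. f x) \<and> (\<forall>x\<in>topspace X. finite {f\<in>A. f x})"
  proof
    fix n
    obtain \<C> where C1: "countable \<C>" and C2: "\<forall>C \<in> \<C>. openin X C \<and> closedin X C" and CU: "\<Union>\<C> = U n"
      using clopen_base[rule_format, OF opens[rule_format, of n]] by (elim exE conjE)
    have C: "countable \<C>" "\<forall>C \<in> \<C>. clop X C" using C1 C2 by (simp_all add: clop_def)
    from L3[OF C] CU show "\<exists>A. A \<subseteq> topspace (Cp01 X) \<and> countable A \<and> (\<forall>f\<in>A. {x\<in>topspace X. f x} \<subseteq> U n)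
     \<and> (\<forall>x\<in>U n. \<exists>f\<in>A. f x) \<and> (\<forall>x\<in>topspace X. finite {f\<in>A. f x})"
      by simp
  qed
  from choice[OF this] obtain A where AA: "\<forall>n. A n \<subseteq> topspace (Cp01 X) \<and> countable (A n) \<and> (\<forall>f\<in>A n. {x\<in>topspace X. f x} \<subseteq> U n)
     \<and> (\<forall>x\<in>U n. \<exists>f\<in>A n. f x) \<and> (\<forall>x\<in>topspace X. finite {f\<in>A n. f x})" by blast
  have A1: "\<And>n. A n \<subseteq> topspace (Cp01 X)" and A2: "\<And>n. countable (A n)"
    and A3: "\<And>n. \<forall>f\<in>A n. {x\<in>topspace X. f x} \<subseteq> U n"
    and A4: "\<And>n. \<forall>x\<in>U n. \<exists>f\<in>A n. f x"
    and A5: "\<And>n. \<forall>x\<in>topspace X. finite {f\<in>A n. f x}"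
    using AA by simp_all
  have finclop: "finite (A n) \<Longrightarrow> clop X (U n)" for n
    using clop_fin[OF _ A1 A3 A4 Ut] by blast
  show ?thesis
  proof (cases "\<forall>n. finite (A n)")
    case True
    show ?thesis
    proof (intro exI[of _ "\<lambda>m. marczewski U"] conjI allI)
      fix m
      show "continuous_map X powerset_nat_top (marczewski U)"
      proof (rule cont_pnt)
        fix n
        have "{x\<in>topspace X. n \<in> marczewski U x} = U n" using Ut unfolding marczewski_def by auto
        thus "openin X {x\<in>topspace X. n \<in> marczewski U x} \<and> closedin X {x\<in>topspace X. n \<in> marczewski U x}"
          using finclop True unfolding clop_def by simp
      qed
    qed (simp add: discrete_limit_def)
  next
    case False
    then obtain n0 where n0: "infinite (A n0)" by blast
    define A' where "A' n = (if infinite (A n) then A n else A n0)" for n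
    have A'i: "A' n = A (if infinite (A n) then n else n0)" for n unfolding A'_def by simp
    have "\<forall>n. A' n \<subseteq> topspace (Cp01 X) \<and> countable (A' n) \<and> infinite (A' n) \<and> set_converges (Cp01 X) (A' n) (zf X)"
    proof
      fix n
      show "A' n \<subseteq> topspace (Cp01 X) \<and> countable (A' n) \<and> infinite (A' n) \<and> set_converges (Cp01 X) (A' n) (zf X)"
        unfolding A'i
      proof -
        define k where "k = (if infinite (A n) then n else n0)"
        have ik: "infinite (A k)" unfolding k_def using n0 by simp
        show "A k \<subseteq> topspace (Cp01 X) \<and> countable (A k) \<and> infinite (A k) \<and> set_converges (Cp01 X) (A k) (zf X)"
          using A1[of k] A2[of k] ik L1[OF A1[of k] A2[of k] ik A5[of k]] by simp
      qed
    qed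
    from alpha1[unfolded alpha1_space_def, rule_format, of "zf X" A', OF zf_top this[rule_format]]
    obtain B where BB: "\<forall>n. B n \<subseteq> A' n \<and> finite (A' n - B n)"
      and B3: "set_converges (Cp01 X) (\<Union>n. B n) (zf X)" by (elim exE conjE)
    have B1: "\<And>n. B n \<subseteq> A' n" and B2: "\<And>n. finite (A' n - B n)" using BB by simp_all
    obtain e where be: "bij_betw e (UNIV::nat set) (\<Union>n. B n)" and fe: "\<forall>x\<in>topspace X. finite {j. e j x}"
      using L2[OF B3] by blast
    have eT: "e j \<in> topspace (Cp01 X)" for j
    proof -
      have "e j \<in> (\<Union>n. B n)" using be bij_betw_apply by fastforce
      then obtain n where "e j \<in> B n" by blast
      hence "e j \<in> A' n" using B1[of n] by blast
      thus ?thesis using A1 unfolding A'i by blast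
    qed
    define W where "W n = (if infinite (A n) then {x\<in>topspace X. \<exists>f\<in>A n - B n. f x} else U n)" for n
    have Wsub: "W n \<subseteq> U n" for n unfolding W_def using A3 by auto
    have Wclop: "clop X (W n)" for n
    proof (cases "infinite (A n)")
      case True
      have "W n = (\<Union>f\<in>A n - B n. {x\<in>topspace X. f x})" unfolding W_def using True by auto
      moreover have "finite (A n - B n)" using B2[of n] True unfolding A'_def by simp
      ultimately show ?thesis using A1 by (auto intro!: clop_Union clop_of_top)
    next
      case False thus ?thesis unfolding W_def using finclop by simp
    qed
    define \<Psi> where "\<Psi> m x = {n. x \<in> W n \<or> (\<exists>j\<le>m. e j x \<and> {y\<in>topspace X. e j y} \<subseteq> U n)}" for m x
    show ?thesis
    proof (intro exI[of _ \<Psi>] conjI allI)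
      fix m
      show "continuous_map X powerset_nat_top (\<Psi> m)"
      proof (rule cont_pnt)
        fix n
        have "{x\<in>topspace X. n \<in> \<Psi> m x} = W n \<union> (\<Union>j\<in>{j. j \<le> m \<and> {y\<in>topspace X. e j y} \<subseteq> U n}. {y\<in>topspace X. e j y})"
          unfolding \<Psi>_def using Wsub Ut by blast
        moreover have "clop X (W n \<union> (\<Union>j\<in>{j. j \<le> m \<and> {y\<in>topspace X. e j y} \<subseteq> U n}. {y\<in>topspace X. e j y}))"
          using Wclop clop_of_top[OF eT] by (intro clop_Un clop_Union) auto
        ultimately show "openin X {x\<in>topspace X. n \<in> \<Psi> m x} \<and> closedin X {x\<in>topspace X. n \<in> \<Psi> m x}"
          unfolding clop_def by simp
      qed
    next
      show "discrete_limit (topspace X) \<Psi> (marczewski U)"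
        unfolding discrete_limit_def
      proof
        fix x assume x: "x \<in> topspace X"
        obtain N where N: "{j. e j x} \<subseteq> {..<N}" using fe x finite_nat_bounded by blast
        have "\<Psi> m x = marczewski U x" if m: "m \<ge> N" for m
        proof
          show "\<Psi> m x \<subseteq> marczewski U x" unfolding \<Psi>_def marczewski_def using Wsub x by blast
          show "marczewski U x \<subseteq> \<Psi> m x"
          proof
            fix n assume "n \<in> marczewski U x"
            hence xn: "x \<in> U n" unfolding marczewski_def by simp
            show "n \<in> \<Psi> m x"
            proof (cases "infinite (A n)")
              case False thus ?thesis unfolding \<Psi>_def W_def using xn by simp
            next
              case True
              obtain f where f: "f \<in> A n" "f x" using A4 xn by blast
              show ?thesis
              proof (cases "f \<in> B n")
                case False thus ?thesis unfolding \<Psi>_def W_def using True f x by auto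
              next
                case fB: True
                hence "f \<in> range e" using be unfolding bij_betw_def by blast
                then obtain j where j: "e j = f" by blast
                hence "j < N" using N f by blast
                moreover have "{y\<in>topspace X. e j y} \<subseteq> U n" using A3 f j by blast
                ultimately show ?thesis unfolding \<Psi>_def using j f m by force
              qed
            qed
          qed
        qed
        thus "\<forall>\<^sub>F m in sequentially. \<Psi> m x = marczewski U x"
          unfolding eventually_sequentially by blast
      qed
    qed
  qed
qed

end
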